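(* Let $T$ be a hyperplane (linear subspace of dimension $n-1$) in $\mathbf{R}^n$, $\alpha\in T$, $f:T\to T^\perp$ a function continuous at $\alpha$, $a=\alpha+f(\alpha)$, $A=\{\chi+f(\chi):\chi\in T\}$, and suppose $\mathrm{Tan}(A,a)\subseteq T$. Then $f$ is differentiable at $\alpha$ with $\mathrm{D}f(\alpha)=0$, and $\mathrm{Tan}(A,a)=T$.
   Context: For $A\subseteq\mathbf{R}^n$ and $a\in\mathbf{R}^n$, the tangent cone $\mathrm{Tan}(A,a)$ is the set of all $v\in\mathbf{R}^n$ such that for every $\varepsilon>0$ there exist $x\in A$ and $r>0$ with $|x-a|<\varepsilon$ and $|r(x-a)-v|<\varepsilon$ (Federer's definition). *)

theory Defs
  imports "HOL-Analysis.Analysis"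
begin

definition Tan :: "'a::real_normed_vector set \<Rightarrow> 'a \<Rightarrow> 'a set" where
  "Tan A a = {v. \<forall>\<epsilon>>0. \<exists>x\<in>A. \<exists>r>0. norm (x - a) < \<epsilon> \<and> norm (r *\<^sub>R (x - a) - v) < \<epsilon>}"

end

theory Submission
  imports Defs
begin

lemma perp_bound:
  fixes u w v :: "'a::euclidean_space"
  assumes T: "subspace T" and u: "u \<in> T" and w: "w \<in> orthogonal_comp T" and v: "v \<in> T"
    and d: "d > 0"
  shows "norm w / d \<le> norm ((1/d) *\<^sub>R (u + w) - v)"
proof -
  define s where "s = (1/d) *\<^sub>R (u + w)"
  define z where "z = (1/d) *\<^sub>R w"
  have zs: "z = (s - v) + (v - (1/d) *\<^sub>R u)"
    unfolding s_def z_def by (simp add: algebra_simps)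
  have inT: "v - (1/d) *\<^sub>R u \<in> T" using T u v by (simp add: subspace_diff subspace_scale)
  have z0: "z \<bullet> (v - (1/d) *\<^sub>R u) = 0"
  proof -
    have "(v - (1/d) *\<^sub>R u) \<bullet> w = 0"
      using w inT unfolding orthogonal_comp_def orthogonal_def by blast
    then show ?thesis unfolding z_def by (simp add: inner_commute)
  qed
  have "norm z ^ 2 = z \<bullet> z" by (simp add: power2_norm_eq_inner)
  also have "\<dots> = z \<bullet> (s - v)" using z0 zs
    by (metis add.right_neutral inner_add_right)
  also have "\<dots> \<le> norm z * norm (s - v)" by (rule Cauchy_Schwarz_ineq2[THEN order_trans[OF abs_ge_self]])
  finally have "norm z ^ 2 \<le> norm z * norm (s - v)" .
  then have "norm z \<le> norm (s - v)"
    by (metis less_le mult_le_cancel_left norm_ge_zero power2_eq_square mult_zero_left order_trans)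
  moreover have "norm z = norm w / d" unfolding z_def using d by simp
  ultimately show ?thesis unfolding s_def by simp
qed

lemma ratio_bound:
  fixes u w :: "'a::real_inner"
  assumes c: "c > 0" and h: "c * norm u < norm w" and o: "inner u w = 0"
  shows "norm (u + w) > 0 \<and> c / (1 + c) \<le> norm w / norm (u + w)"
proof -
  have nu: "norm u \<le> norm w / c" using h c by (simp add: field_simps)
  have d: "norm (u + w) \<le> norm u + norm w" by (rule norm_triangle_ineq)
  have wpos: "norm w > 0" using h c by (smt (verit) mult_nonneg_nonneg norm_ge_zero)
  have "norm w \<le> norm (u + w) + norm u"
    by (metis add_diff_cancel_left' norm_triangle_ineq4 add.commute)
  have dpos: "norm (u + w) > 0"
  proof (rule ccontr)
    assume "\<not> norm (u + w) > 0"
    then have "u + w = 0" by simp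
    then have "w = - u" by (simp add: eq_neg_iff_add_eq_0 add.commute)
    then have "norm w = norm u" by simp
    have "inner u u = 0" using o \<open>w = - u\<close> by simp
    then have "u = 0" by simp
    then show False using \<open>w = - u\<close> wpos by simp
  qed
  have "c * norm (u + w) \<le> c * norm u + c * norm w" using d c
    by (metis distrib_left mult_left_mono less_le)
  then have "c * norm (u + w) \<le> norm w * (1 + c)" using h by (simp add: algebra_simps)
  then have "c / (1 + c) \<le> norm w / norm (u + w)" using c dpos
    by (simp add: field_simps)
  with dpos show ?thesis by simp
qed


theorem lemma2p43:
  fixes T :: "'a::euclidean_space set" and f :: "'a \<Rightarrow> 'a" and \<alpha> :: 'a
  assumes "subspace T" and "dim T = DIM('a) - 1"
    and "\<alpha> \<in> T"
    and "\<forall>y\<in>T. f y \<in> orthogonal_comp T"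
    and "continuous (at \<alpha> within T) f"
    and "Tan {y + f y | y. y \<in> T} (\<alpha> + f \<alpha>) \<subseteq> T"
  shows "(f has_derivative (\<lambda>x. 0)) (at \<alpha> within T)
    \<and> Tan {y + f y | y. y \<in> T} (\<alpha> + f \<alpha>) = T"
proof -
  let ?A = "{y + f y | y. y \<in> T}"
  let ?a = "\<alpha> + f \<alpha>"
  note T = assms(1)
  have udiff: "y - \<alpha> \<in> T" if "y \<in> T" for y
    using T assms(3) that by (simp add: subspace_diff)
  have fdiff: "f z - f \<alpha> \<in> orthogonal_comp T" if "z \<in> T" for z
    using assms(4) that assms(3) by (simp add: subspace_diff subspace_orthogonal_comp)
  have orth: "inner (y - \<alpha>) (f z - f \<alpha>) = 0" if "y \<in> T" "z \<in> T" for y z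
    using udiff[OF that(1)] fdiff[OF that(2)] unfolding orthogonal_comp_def orthogonal_def by blast
  have deriv: "(f has_derivative (\<lambda>x. 0)) (at \<alpha> within T)"
  proof (rule ccontr)
    assume nd: "\<not> ?thesis"
    have "\<not> (\<forall>e>0. \<exists>d>0. \<forall>y\<in>T. norm (y - \<alpha>) < d \<longrightarrow> norm (f y - f \<alpha>) \<le> e * norm (y - \<alpha>))"
      using nd unfolding has_derivative_within_alt by simp
    then obtain c where c: "c > 0" and cd: "\<And>d. d > 0 \<Longrightarrow> \<exists>y\<in>T. norm (y - \<alpha>) < d \<and> c * norm (y - \<alpha>) < norm (f y - f \<alpha>)"
      by (auto simp: not_le)
    have "\<exists>y\<in>T. norm (y - \<alpha>) < 1/Suc k \<and> norm (f y - f \<alpha>) < 1/Suc k \<and> c * norm (y - \<alpha>) < norm (f y - f \<alpha>)" for k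
    proof -
      have pk: "(1::real)/Suc k > 0" by simp
      obtain \<delta> where \<delta>: "\<delta>>0" "\<forall>x'\<in>T. dist x' \<alpha> < \<delta> \<longrightarrow> dist (f x') (f \<alpha>) < 1/Suc k"
        using assms(5) pk unfolding continuous_within_eps_delta by blast
      obtain y where "y\<in>T" "norm (y-\<alpha>) < min \<delta> (1/Suc k)" "c * norm (y - \<alpha>) < norm (f y - f \<alpha>)"
        using cd[of "min \<delta> (1/Suc k)"] \<delta> pk by auto
      then show ?thesis using \<delta> by (auto simp: dist_norm)
    qed
    then obtain ch where ch: "\<And>k. ch k \<in> T" "\<And>k. norm (ch k - \<alpha>) < 1/Suc k"
      "\<And>k. norm (f (ch k) - f \<alpha>) < 1/Suc k" "\<And>k. c * norm (ch k - \<alpha>) < norm (f (ch k) - f \<alpha>)"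
      by metis
    define u where "u k = ch k - \<alpha>" for k
    define w where "w k = f (ch k) - f \<alpha>" for k
    define d where "d k = norm (u k + w k)" for k
    define s where "s k = (1 / d k) *\<^sub>R (u k + w k)" for k
    have rb: "d k > 0 \<and> c/(1+c) \<le> norm (w k) / d k" for k
      unfolding d_def using ratio_bound[OF c ch(4)[of k, folded u_def w_def]] orth[OF ch(1) ch(1), of k k]
      unfolding u_def w_def by simp
    have sS: "s k \<in> sphere 0 1" for k using rb[of k] unfolding s_def d_def by simp
    obtain v \<sigma> where v: "v \<in> sphere 0 1" "strict_mono \<sigma>" "(s \<circ> \<sigma>) \<longlonglongrightarrow> v"
      using seq_compactE[OF compact_imp_seq_compact[OF compact_sphere]] sS by metis
    have "v \<in> Tan ?A ?a"
      unfolding Tan_def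
    proof (intro CollectI allI impI)
      fix \<epsilon> :: real assume \<epsilon>: "\<epsilon> > 0"
      obtain N1 where N1: "\<forall>k\<ge>N1. norm ((s\<circ>\<sigma>) k - v) < \<epsilon>" using v(3) \<epsilon> unfolding LIMSEQ_iff by blast
      obtain N2 :: nat where N2': "2/\<epsilon> < real N2" using reals_Archimedean2 by blast
      have N2: "2 / real (Suc N2) < \<epsilon>" using N2' \<epsilon> by (simp add: field_simps)
      define k where "k = \<sigma> (max N1 N2)"
      have kN: "k \<ge> N2" using seq_suble[OF v(2), of "max N1 N2"] unfolding k_def by simp
      have x: "ch k + f (ch k) \<in> ?A" using ch(1) by blast
      have xa: "ch k + f (ch k) - ?a = u k + w k" unfolding u_def w_def by (simp add: algebra_simps)
      have "norm (u k + w k) \<le> norm (u k) + norm (w k)" by (rule norm_triangle_ineq)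
      also have "\<dots> < 2 / real (Suc k)" using ch(2)[of k] ch(3)[of k] unfolding u_def w_def by simp
      also have "\<dots> \<le> 2 / real (Suc N2)" using kN by (simp add: frac_le)
      also have "\<dots> < \<epsilon>" by (rule N2)
      finally have n1: "norm (u k + w k) < \<epsilon>" .
      have n2: "norm ((1 / d k) *\<^sub>R (u k + w k) - v) < \<epsilon>"
        using N1[rule_format, of "max N1 N2"] unfolding k_def s_def by simp
      have "1 / d k > 0" using rb[of k] by simp
      then show "\<exists>x\<in>?A. \<exists>r>0. norm (x - ?a) < \<epsilon> \<and> norm (r *\<^sub>R (x - ?a) - v) < \<epsilon>"
        using x n1[folded xa] n2[folded xa] by blast
    qed
    then have vT: "v \<in> T" using assms(6) by blast
    have lb: "c/(1+c) \<le> norm ((s\<circ>\<sigma>) k - v)" for k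
    proof -
      have "norm (w (\<sigma> k)) / d (\<sigma> k) \<le> norm ((1 / d (\<sigma> k)) *\<^sub>R (u (\<sigma> k) + w (\<sigma> k)) - v)"
        using perp_bound[OF T, of "u (\<sigma> k)" "w (\<sigma> k)" v "d (\<sigma> k)"] rb[of "\<sigma> k"] vT
          udiff[OF ch(1)] fdiff[OF ch(1)] unfolding u_def w_def by simp
      then show ?thesis using rb[of "\<sigma> k"] unfolding s_def by simp
    qed
    have "c/(1+c) > 0" using c by simp
    then obtain N where "\<forall>k\<ge>N. norm ((s\<circ>\<sigma>) k - v) < c/(1+c)" using v(3) unfolding LIMSEQ_iff by blast
    then show False using lb[of N] by fastforce
  qed
  have "T \<subseteq> Tan ?A ?a"
  proof
    fix v assume vT: "v \<in> T"
    show "v \<in> Tan ?A ?a" unfolding Tan_def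
    proof (intro CollectI allI impI)
      fix \<epsilon> :: real assume \<epsilon>: "\<epsilon>>0"
      show "\<exists>x\<in>?A. \<exists>r>0. norm (x - ?a) < \<epsilon> \<and> norm (r *\<^sub>R (x - ?a) - v) < \<epsilon>"
      proof (cases "v = 0")
        case True
        have "?a \<in> ?A" using assms(3) by blast
        moreover have "norm (?a - ?a) < \<epsilon> \<and> norm ((1::real) *\<^sub>R (?a - ?a) - v) < \<epsilon>"
          using True \<epsilon> by simp
        ultimately show ?thesis using zero_less_one by blast
      next
        case False
        then have nv: "norm v > 0" by simp
        define \<eta> where "\<eta> = min 1 (\<epsilon> / (2 * norm v))"
        have \<eta>: "\<eta> > 0" unfolding \<eta>_def using nv \<epsilon> by simp
        obtain \<delta> where \<delta>: "\<delta>>0" "\<forall>y\<in>T. norm (y - \<alpha>) < \<delta> \<longrightarrow> norm (f y - f \<alpha>) \<le> \<eta> * norm (y - \<alpha>)"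
          using deriv \<eta> unfolding has_derivative_within_alt by force
        define t where "t = min \<delta> \<epsilon> / (4 * norm v)"
        have t: "t > 0" unfolding t_def using \<delta> \<epsilon> nv by simp
        have tv: "t * norm v = min \<delta> \<epsilon> / 4" unfolding t_def using nv by simp
        define y where "y = \<alpha> + t *\<^sub>R v"
        have yT: "y \<in> T" unfolding y_def using T assms(3) vT by (simp add: subspace_add subspace_scale)
        have ya: "norm (y - \<alpha>) = t * norm v" unfolding y_def using t by simp
        have "norm (y - \<alpha>) < \<delta>" using ya tv \<delta> by simp
        then have fb: "norm (f y - f \<alpha>) \<le> \<eta> * (t * norm v)" using \<delta>(2) yT ya by metis
        have x: "y + f y \<in> ?A" using yT by blast
        have xa: "y + f y - ?a = t *\<^sub>R v + (f y - f \<alpha>)" unfolding y_def by (simp add: algebra_simps)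
        have "\<eta> \<le> 1" unfolding \<eta>_def by simp
        then have fb1: "norm (f y - f \<alpha>) \<le> t * norm v" using fb t nv
          by (smt (verit) mult_le_cancel_right2 mult_pos_pos)
        have "norm (y + f y - ?a) \<le> t * norm v + norm (f y - f \<alpha>)"
          unfolding xa using t by (metis norm_triangle_ineq norm_scaleR abs_of_pos)
        also have "\<dots> \<le> 2 * (min \<delta> \<epsilon> / 4)" using fb1 tv by linarith
        also have "\<dots> < \<epsilon>" using \<epsilon> \<delta> by simp
        finally have n1: "norm (y + f y - ?a) < \<epsilon>" .
        have e2: "(1/t) *\<^sub>R (y + f y - ?a) - v = (1/t) *\<^sub>R (f y - f \<alpha>)"
          unfolding xa using t by (simp add: algebra_simps)
        have "norm ((1/t) *\<^sub>R (f y - f \<alpha>)) = norm (f y - f \<alpha>) / t" using t by simp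
        also have "\<dots> \<le> \<eta> * norm v" using fb t by (simp add: field_simps)
        also have "\<dots> \<le> (\<epsilon> / (2 * norm v)) * norm v" unfolding \<eta>_def using nv
          by (intro mult_right_mono) auto
        also have "\<dots> < \<epsilon>" using nv \<epsilon> by simp
        finally have n2: "norm ((1/t) *\<^sub>R (y + f y - ?a) - v) < \<epsilon>" using e2 by simp
        have "1/t > 0" using t by simp
        then show ?thesis using x n1 n2 by blast
      qed
    qed
  qed
  then show ?thesis using deriv assms(6) by blast
qed

end
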